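(* Let $f$ be an integrable function on $\mathbb R$ with $\tilde f(0)=0$, whose derivative $f'$ exists and is integrable, and suppose there are constants $C_\pm>0$, $L>1$, $\alpha>0$, $\varepsilon>0$ such that \[ |f(y)|\le \frac{C_-}{(-y)^{1+\varepsilon}}\ \text{ for } y\le -L,\qquad |f(y)|\le \frac{C_+}{y^{1+\alpha}}\ \text{ for } y\ge L.\] Then there is a constant $C_\varepsilon>0$ depending on $\varepsilon$ such that \[ |\widetilde{\check f}(-k)|\le C_\varepsilon\,k^{q(\varepsilon)}+O(k)\quad (k\to0^+),\qquad |\widetilde{\check f}(-k)|\le \frac{2^{1+\alpha}C_+}{\alpha(\log k)^\alpha}+O\!\left(\frac1{\sqrt k}\right)\quad (k\to\infty),\] and \[ |\widetilde{\check f}^{\,Th}(-k)|\le \frac{3C_-}{\varepsilon(-\log k)^\varepsilon}+O(k)\quad (k\to0^+),\qquad |\widetilde{\check f}^{\,Th}(-k)|\le \frac{2^{\alpha}C_+}{\alpha(\log k)^\alpha}+O\!\left(\frac1{\sqrt k}\right)\quad (k\to\infty),\] where $q(\varepsilon)=\varepsilon$ if $0<\varepsilon\le1/2$ and $q(\varepsilon)=1/2$ if $\varepsilon>1/2$.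
   Context: Fourier transforms are $\tilde g(p)=(2\pi)^{-1/2}\int_{\mathbb R} g(y)e^{-ipy}\,dy$. Let $x(y)=-\log(1+e^{-y})$. For a function $f$ on $\mathbb R$ and $k\ge0$ define $\widetilde{\check f}(-k)=(2\pi)^{-1/2}\int_{\mathbb R} f(y)\,e^{ikx(y)}\,dy$ and $\widetilde{\check f}^{\,Th}(-k)=(2\pi)^{-1/2}\int_{\mathbb R} f(y)\,e^{-ike^{-y}}\,dy$. *)

theory Defs
  imports "HOL-Analysis.Analysis"
begin

definition FT :: "(real \<Rightarrow> complex) \<Rightarrow> real \<Rightarrow> complex" where
  "FT g p = complex_of_real (1 / sqrt (2 * pi)) *
      (LINT y|lborel. g y * cis (- p * y))"

definition xvar :: "real \<Rightarrow> real" where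
  "xvar y = - ln (1 + exp (- y))"

text \<open>checkFT f k is the quantity written tilde-check-f(-k).\<close>
definition checkFT :: "(real \<Rightarrow> complex) \<Rightarrow> real \<Rightarrow> complex" where
  "checkFT f k = complex_of_real (1 / sqrt (2 * pi)) *
      (LINT y|lborel. f y * cis (k * xvar y))"

text \<open>checkFT_Th f k is the quantity written tilde-check-f^Th(-k).\<close>
definition checkFT_Th :: "(real \<Rightarrow> complex) \<Rightarrow> real \<Rightarrow> complex" where
  "checkFT_Th f k = complex_of_real (1 / sqrt (2 * pi)) *
      (LINT y|lborel. f y * cis (- k * exp (- y)))"

definition qexp :: "real \<Rightarrow> real" where
  "qexp \<epsilon> = (if \<epsilon> \<le> 1/2 then \<epsilon> else 1/2)"

end

theory Submission
  imports Defs "HOL-Real_Asymp.Real_Asymp"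
begin




lemma tail_right_powr:
  fixes c p :: real assumes c: "c > 0" and p: "p > 0"
  shows "set_integrable lborel {c<..} (\<lambda>y. y powr (-1-p))"
    and "(LINT y:{c<..}|lborel. y powr (-1-p)) = c powr (-p) / p"
proof -
  let ?F = "\<lambda>y::real. - (y powr (-p)) / p"
  have D: "\<And>x. ereal c < ereal x \<Longrightarrow> ereal x < \<infinity> \<Longrightarrow> DERIV ?F x :> x powr (-1-p)"
  proof -
    fix x assume "ereal c < ereal x" "ereal x < \<infinity>"
    then have x: "x > 0" using c by simp
    show "DERIV ?F x :> x powr (-1-p)"
      using x p by (auto intro!: derivative_eq_intros simp: field_simps powr_diff powr_minus)
  qed
  have C: "\<And>x. ereal c < ereal x \<Longrightarrow> ereal x < \<infinity> \<Longrightarrow> isCont (\<lambda>y. y powr (-1-p)) x"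
    using c by (auto intro!: continuous_intros)
  have A: "((?F \<circ> real_of_ereal) \<longlongrightarrow> ?F c) (at_right (ereal c))"
  proof -
    have "isCont ?F c" using c p by (auto intro!: continuous_intros)
    then have "(?F \<longlongrightarrow> ?F c) (at c)" by (simp add: isCont_def)
    then show ?thesis unfolding ereal_tendsto_simps by (simp add: filterlim_at_split)
  qed
  have B: "((?F \<circ> real_of_ereal) \<longlongrightarrow> 0) (at_left \<infinity>)"
    unfolding ereal_tendsto_simps using p by real_asymp
  note R = interval_integral_FTC_nonneg[OF _ D C _ A B]
  show "set_integrable lborel {c<..} (\<lambda>y. y powr (-1-p))"
    using R(1) c by simp
  have "(LBINT y=ereal c..\<infinity>. y powr (-1-p)) = 0 - ?F c"
    using R(2) c by simp
  then show "(LINT y:{c<..}|lborel. y powr (-1-p)) = c powr (-p) / p"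
    by (simp add: interval_lebesgue_integral_def)
qed

lemma tail_left_powr:
  fixes c p :: real assumes c: "c > 0" and p: "p > 0"
  shows "set_integrable lborel {..< -c} (\<lambda>y. (-y) powr (-1-p))"
    and "(LINT y:{..< -c}|lborel. (-y) powr (-1-p)) = c powr (-p) / p"
proof -
  let ?F = "\<lambda>y::real. (-y) powr (-p) / p"
  have D: "\<And>x. - \<infinity> < ereal x \<Longrightarrow> ereal x < ereal (-c) \<Longrightarrow> DERIV ?F x :> (-x) powr (-1-p)"
  proof -
    fix x assume "- \<infinity> < ereal x" "ereal x < ereal (-c)"
    then have x: "x < 0" using c by simp
    show "DERIV ?F x :> (-x) powr (-1-p)"
      using x p by (auto intro!: derivative_eq_intros simp: field_simps powr_diff powr_minus)
  qed
  have C: "\<And>x. - \<infinity> < ereal x \<Longrightarrow> ereal x < ereal (-c) \<Longrightarrow> isCont (\<lambda>y. (-y) powr (-1-p)) x"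
    using c by (auto intro!: continuous_intros)
  have B: "((?F \<circ> real_of_ereal) \<longlongrightarrow> ?F (-c)) (at_left (ereal (-c)))"
  proof -
    have "isCont ?F (-c)" using c p by (auto intro!: continuous_intros)
    then have "(?F \<longlongrightarrow> ?F (-c)) (at (-c))" by (simp add: isCont_def)
    then show ?thesis unfolding ereal_tendsto_simps by (simp add: filterlim_at_split)
  qed
  have A: "((?F \<circ> real_of_ereal) \<longlongrightarrow> 0) (at_right (-\<infinity>))"
    unfolding ereal_tendsto_simps using p by real_asymp
  note R = interval_integral_FTC_nonneg[OF _ D C _ A B]
  show "set_integrable lborel {..< -c} (\<lambda>y. (-y) powr (-1-p))"
    using R(1) c by simp
  have "(LBINT y=-\<infinity>..ereal (-c). (-y) powr (-1-p)) = ?F (-c) - 0"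
    using R(2) c by simp
  then show "(LINT y:{..< -c}|lborel. (-y) powr (-1-p)) = c powr (-p) / p"
    by (simp add: interval_lebesgue_integral_def)
qed




lemma cis_minus_one_le: "cmod (cis t - 1) \<le> \<bar>t\<bar>"
proof -
  have c: "cos t = 1 - 2 * (sin (t/2))\<^sup>2"
    using cos_double_sin[of "t/2"] by simp
  have "cmod (cis t - 1) = sqrt ((cos t - 1)\<^sup>2 + (sin t)\<^sup>2)"
    by (simp add: cmod_def)
  also have "(cos t - 1)\<^sup>2 + (sin t)\<^sup>2 = 2 - 2 * cos t"
    using sin_cos_squared_add[of t] by (simp add: power2_eq_square algebra_simps)
  also have "\<dots> = (2 * sin (t/2))\<^sup>2" using c by (simp add: power2_eq_square)
  also have "sqrt \<dots> = \<bar>2 * sin (t/2)\<bar>" by (rule real_sqrt_abs)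
  also have "\<dots> = 2 * \<bar>sin (t/2)\<bar>" by simp
  also have "\<dots> \<le> 2 * \<bar>t/2\<bar>" using abs_sin_x_le_abs_x[of "t/2"] by simp
  finally show ?thesis by simp
qed

lemma cis_minus_one_le2: "cmod (cis t - 1) \<le> 2"
  using norm_triangle_ineq4[of "cis t" 1] by simp

lemma fin_powr:
  fixes c d q :: real assumes c: "0 < c" "c \<le> d" and q: "0 < q" "q < 1"
  shows "set_integrable lborel {-d..-c} (\<lambda>y. (-y) powr (-q))"
    and "(LINT y:{-d..-c}|lborel. (-y) powr (-q)) \<le> d powr (1-q) / (1-q)"
proof -
  have cont: "continuous_on {-d..-c} (\<lambda>y. (-y) powr (-q))"
    using c by (auto intro!: continuous_intros)
  show "set_integrable lborel {-d..-c} (\<lambda>y. (-y) powr (-q))"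
    by (rule borel_integrable_atLeastAtMost'[OF cont])
  let ?F = "\<lambda>y::real. - ((-y) powr (1-q)) / (1-q)"
  have "(LBINT y=ereal (-d)..ereal (-c). (-y) powr (-q)) = ?F (-c) - ?F (-d)"
  proof (rule interval_integral_FTC_finite)
    show "continuous_on {min (- d) (- c)..max (- d) (- c)} (\<lambda>y. (-y) powr (-q))"
      using cont c by simp
    fix x assume "min (- d) (- c) \<le> x" "x \<le> max (- d) (- c)"
    then have x: "x < 0" using c by simp
    have d1: "DERIV (\<lambda>y. (-y) powr (1-q)) x :> (1-q) * (-x) powr (1-q - of_nat 1) * (-1)"
      by (rule DERIV_fun_powr) (use x in \<open>auto intro!: derivative_eq_intros\<close>)
    have d2: "DERIV ?F x :> - ((1-q) * (-x) powr (1-q - of_nat 1) * (-1)) / (1-q)"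
      using DERIV_cdivide[OF DERIV_minus[OF d1], of "1-q"] by simp
    have "(?F has_real_derivative (-x) powr (-q)) (at x)"
      using d2 q by simp
    then show "(?F has_vector_derivative (-x) powr (-q)) (at x within {min (- d) (- c)..max (- d) (- c)})"
      by (simp add: has_real_derivative_iff_has_vector_derivative has_vector_derivative_at_within)
  qed
  moreover have "?F (-c) - ?F (-d) \<le> d powr (1-q) / (1-q)"
  proof -
    have e: "?F (-c) - ?F (-d) = d powr (1-q) / (1-q) - c powr (1-q) / (1-q)" by simp
    have "c powr (1-q) / (1-q) \<ge> 0" using q by simp
    then show ?thesis using e by linarith
  qed
  ultimately show "(LINT y:{-d..-c}|lborel. (-y) powr (-q)) \<le> d powr (1-q) / (1-q)"
    using c by (simp add: interval_integral_Icc)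
qed

lemma ev1: fixes s e :: real assumes "s > 0" "e > 0"
  shows "\<forall>\<^sub>F k in at_right 0. k powr s * (- ln k) powr e \<le> 2"
proof -
  have "((\<lambda>k. k powr s * (- ln k) powr e) \<longlongrightarrow> 0) (at_right 0)"
    using assms by real_asymp
  then have "\<forall>\<^sub>F k in at_right 0. k powr s * (- ln k) powr e < 2" by (rule order_tendstoD) simp
  then show ?thesis by (rule eventually_mono) simp
qed




lemma cis_comp_vd:
  assumes "(\<phi> has_real_derivative d) (at y)"
  shows "((\<lambda>y. cis (\<phi> y)) has_vector_derivative (\<i> * cis (\<phi> y) * complex_of_real d)) (at y)"
  using assms by (auto intro!: derivative_eq_intros simp: has_vector_derivative_complex_iff)

lemma ibp_bound:
  fixes f f' :: "real \<Rightarrow> complex" and w w' psi :: "real \<Rightarrow> real" and k a Y B :: real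
  assumes k: "k > 0" and aY: "a \<le> Y"
   and fd: "\<And>y. (f has_vector_derivative f' y) (at y)"
   and f_int: "integrable lborel f" and f'_int: "integrable lborel f'"
   and wd: "\<And>y. (w has_real_derivative w' y) (at y)"
   and w'c: "continuous_on UNIV w'"
   and pd: "\<And>y. (psi has_real_derivative 1 / w y) (at y)"
   and wpos: "\<And>y. w y > 0"
   and B: "\<And>y. a \<le> y \<Longrightarrow> y \<le> Y \<Longrightarrow> \<bar>w y\<bar> \<le> B \<and> \<bar>w' y\<bar> \<le> B"
  shows "norm (LINT y:{a..Y}|lborel. f y * cis (k * psi y))
     \<le> (norm (f Y) * w Y + norm (f a) * w a
        + B * (LINT y|lborel. norm (f' y)) + B * (LINT y|lborel. norm (f y))) / k"
proof -
  define c where "c = 1 / (\<i> * complex_of_real k)"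
  define G where "G y = f y * complex_of_real (w y) * cis (k * psi y) * c" for y
  define F where "F y = f y * cis (k * psi y)" for y
  define H where "H y = (f' y * complex_of_real (w y) + f y * complex_of_real (w' y)) * cis (k * psi y) * c" for y
  have wc: "continuous_on UNIV w"
    using wd by (meson DERIV_isCont continuous_at_imp_continuous_on)
  have pc: "continuous_on UNIV psi"
    using pd by (meson DERIV_isCont continuous_at_imp_continuous_on)
  have Gd: "(G has_vector_derivative (F y + H y)) (at y)" for y
  proof -
    have d1: "((\<lambda>y. cis (k * psi y)) has_vector_derivative (\<i> * cis (k * psi y) * complex_of_real (k * (1 / w y)))) (at y)"
      by (rule cis_comp_vd) (auto intro!: derivative_eq_intros pd)
    have d2: "((\<lambda>y. complex_of_real (w y)) has_vector_derivative complex_of_real (w' y)) (at y)"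
      using wd[of y] by (simp add: has_real_derivative_iff_has_vector_derivative has_vector_derivative_of_real)
    have d3: "((\<lambda>y. f y * complex_of_real (w y)) has_vector_derivative
        (f y * complex_of_real (w' y) + f' y * complex_of_real (w y))) (at y)"
      by (rule has_vector_derivative_mult[OF fd d2])
    have d4: "((\<lambda>y. f y * complex_of_real (w y) * cis (k * psi y)) has_vector_derivative
       ((f y * complex_of_real (w y)) * (\<i> * cis (k * psi y) * complex_of_real (k * (1 / w y)))
        + (f y * complex_of_real (w' y) + f' y * complex_of_real (w y)) * cis (k * psi y))) (at y)"
      by (rule has_vector_derivative_mult[OF d3 d1])
    have "(G has_vector_derivative
       ((f y * complex_of_real (w y)) * (\<i> * cis (k * psi y) * complex_of_real (k * (1 / w y)))
        + (f y * complex_of_real (w' y) + f' y * complex_of_real (w y)) * cis (k * psi y)) * c) (at y)"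
      unfolding G_def
      using has_vector_derivative_mult[OF d4 has_vector_derivative_const[of c]] by simp
    moreover have "((f y * complex_of_real (w y)) * (\<i> * cis (k * psi y) * complex_of_real (k * (1 / w y)))
        + (f y * complex_of_real (w' y) + f' y * complex_of_real (w y)) * cis (k * psi y)) * c = F y + H y"
      using k wpos[of y] unfolding F_def H_def c_def
      by (simp add: field_simps)
    ultimately show ?thesis by simp
  qed
  have ftc: "((\<lambda>y. F y + H y) has_integral (G Y - G a)) {a..Y}"
    by (rule fundamental_theorem_of_calculus[OF aY]) (auto intro: has_vector_derivative_at_within Gd)
  have fm: "f \<in> borel_measurable lborel" using f_int by auto
  have f'm: "f' \<in> borel_measurable lborel" using f'_int by auto
  have cism: "(\<lambda>y. cis (k * psi y)) \<in> borel_measurable lborel"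
  proof -
    have "continuous_on UNIV (\<lambda>y. cis (k * psi y))" using pc by (auto intro!: continuous_intros)
    from borel_measurable_continuous_onI[OF this] show ?thesis by simp
  qed
  have wm: "w \<in> borel_measurable lborel" using borel_measurable_continuous_onI[OF wc] by simp
  have w'm: "w' \<in> borel_measurable lborel" using borel_measurable_continuous_onI[OF w'c] by simp
  have F_int: "integrable lborel F"
    unfolding F_def
  proof (rule Bochner_Integration.integrable_bound[OF f_int])
    show "(\<lambda>y. f y * cis (k * psi y)) \<in> borel_measurable lborel"
      by (rule borel_measurable_times[OF fm cism])
  qed (auto simp: norm_mult)
  have F_set: "set_integrable lborel {a..Y} F"
    unfolding set_integrable_def by (intro integrable_mult_indicator F_int) auto
  define g where "g y = B / k * (norm (f' y) + norm (f y))" for y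
  have B0: "B \<ge> 0" using B[of a] aY by auto
  have g0: "g y \<ge> 0" for y unfolding g_def using B0 k by simp
  have g_int: "integrable lborel g"
    unfolding g_def using f_int f'_int by (auto intro!: integrable_mult_right Bochner_Integration.integrable_add integrable_norm)
  have Hb: "norm (H y) \<le> g y" if "a \<le> y" "y \<le> Y" for y
  proof -
    have "norm (H y) = norm (f' y * complex_of_real (w y) + f y * complex_of_real (w' y)) / k"
      unfolding H_def c_def using k by (simp add: norm_mult norm_divide)
    also have "norm (f' y * complex_of_real (w y) + f y * complex_of_real (w' y))
        \<le> norm (f' y) * \<bar>w y\<bar> + norm (f y) * \<bar>w' y\<bar>"
      by (rule order_trans[OF norm_triangle_ineq]) (simp add: norm_mult)
    also have "\<dots> \<le> norm (f' y) * B + norm (f y) * B"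
      using B[OF that] by (intro add_mono mult_left_mono) auto
    finally show ?thesis using k unfolding g_def by (simp add: divide_right_mono field_simps)
  qed
  have H_set: "set_integrable lborel {a..Y} H"
    unfolding set_integrable_def
  proof (rule Bochner_Integration.integrable_bound[OF integrable_mult_indicator[OF _ g_int, of "{a..Y}"]])
    show "(\<lambda>x. indicator {a..Y} x *\<^sub>R H x) \<in> borel_measurable lborel"
      unfolding H_def by (intro borel_measurable_scaleR borel_measurable_indicator borel_measurable_times
          borel_measurable_add fm f'm cism borel_measurable_const
          measurable_compose[OF wm borel_measurable_of_real] measurable_compose[OF w'm borel_measurable_of_real]) auto
    show "AE x in lborel. norm (indicator {a..Y} x *\<^sub>R H x) \<le> norm (indicator {a..Y} x *\<^sub>R g x)"
      using Hb by (intro AE_I2) (auto simp: indicator_def intro: order_trans[OF _ abs_ge_self])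
  qed auto
  have eqF: "(LINT y:{a..Y}|lborel. F y) = integral {a..Y} F"
    by (rule set_borel_integral_eq_integral(2)[OF F_set])
  have eqH: "(LINT y:{a..Y}|lborel. H y) = integral {a..Y} H"
    by (rule set_borel_integral_eq_integral(2)[OF H_set])
  have "integral {a..Y} (\<lambda>y. F y + H y) = integral {a..Y} F + integral {a..Y} H"
    by (rule integral_add) (auto intro: set_borel_integral_eq_integral(1) F_set H_set)
  then have main: "(LINT y:{a..Y}|lborel. F y) = G Y - G a - (LINT y:{a..Y}|lborel. H y)"
    using ftc eqF eqH by (simp add: integral_unique algebra_simps)
  have nG: "norm (G y) = norm (f y) * w y / k" for y
    unfolding G_def c_def using k wpos[of y] by (simp add: norm_mult norm_divide)
  have "norm (LINT y:{a..Y}|lborel. H y) \<le> (LINT y:{a..Y}|lborel. norm (H y))"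
    by (rule set_integral_norm_bound[OF H_set])
  also have "\<dots> \<le> (LINT y:{a..Y}|lborel. g y)"
  proof (rule set_integral_mono)
    show "set_integrable lborel {a..Y} (\<lambda>y. norm (H y))" by (rule set_integrable_norm[OF H_set])
    show "set_integrable lborel {a..Y} g"
      unfolding set_integrable_def by (intro integrable_mult_indicator g_int) auto
  qed (use Hb in auto)
  also have "\<dots> \<le> (LINT y|lborel. g y)"
    unfolding set_lebesgue_integral_def
  proof (rule integral_mono)
    show "integrable lborel (\<lambda>x. indicator {a..Y} x *\<^sub>R g x)" by (intro integrable_mult_indicator g_int) auto
    show "integrable lborel g" by (rule g_int)
    fix x show "indicator {a..Y} x *\<^sub>R g x \<le> g x" using g0[of x] by (auto simp: indicator_def)
  qed
  also have "\<dots> = B / k * (LINT y|lborel. norm (f' y)) + B / k * (LINT y|lborel. norm (f y))"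
    unfolding g_def using f_int f'_int by (simp add: integrable_norm add_divide_distrib distrib_left)
  finally have nH: "norm (LINT y:{a..Y}|lborel. H y) \<le> B / k * (LINT y|lborel. norm (f' y)) + B / k * (LINT y|lborel. norm (f y))" .
  have "norm (LINT y:{a..Y}|lborel. F y) \<le> norm (G Y) + norm (G a) + norm (LINT y:{a..Y}|lborel. H y)"
    unfolding main by (rule order_trans[OF norm_triangle_ineq4]) (intro add_mono norm_triangle_ineq4 order_refl)
  also have "\<dots> \<le> norm (f Y) * w Y / k + norm (f a) * w a / k + (B / k * (LINT y|lborel. norm (f' y)) + B / k * (LINT y|lborel. norm (f y)))"
    using nH nG by simp
  also have "\<dots> = (norm (f Y) * w Y + norm (f a) * w a
        + B * (LINT y|lborel. norm (f' y)) + B * (LINT y|lborel. norm (f y))) / k"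
    by (simp add: add_divide_distrib)
  finally show ?thesis unfolding F_def .
qed




lemma split3:
  fixes F :: "real \<Rightarrow> complex"
  assumes F: "integrable lborel F" and aY: "a \<le> Y"
  shows "(LINT y|lborel. F y) = (LINT y:{..<a}|lborel. F y) + (LINT y:{a..Y}|lborel. F y) + (LINT y:{Y<..}|lborel. F y)"
proof -
  have i: "integrable lborel (\<lambda>y. indicator S y *\<^sub>R F y)" if "S \<in> sets lborel" for S
    by (rule integrable_mult_indicator[OF that F])
  have pw: "F y = indicator {..<a} y *\<^sub>R F y + indicator {a..Y} y *\<^sub>R F y + indicator {Y<..} y *\<^sub>R F y" for y
    using aY by (auto simp: indicator_def)
  have "(LINT y|lborel. F y) = (LINT y|lborel. indicator {..<a} y *\<^sub>R F y + indicator {a..Y} y *\<^sub>R F y + indicator {Y<..} y *\<^sub>R F y)"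
    by (subst pw) (rule refl)
  also have "\<dots> = (LINT y|lborel. indicator {..<a} y *\<^sub>R F y + indicator {a..Y} y *\<^sub>R F y) + (LINT y|lborel. indicator {Y<..} y *\<^sub>R F y)"
    by (intro Bochner_Integration.integral_add Bochner_Integration.integrable_add i) auto
  also have "(LINT y|lborel. indicator {..<a} y *\<^sub>R F y + indicator {a..Y} y *\<^sub>R F y) = (LINT y|lborel. indicator {..<a} y *\<^sub>R F y) + (LINT y|lborel. indicator {a..Y} y *\<^sub>R F y)"
    by (intro Bochner_Integration.integral_add i) auto
  finally show ?thesis by (simp add: set_lebesgue_integral_def)
qed

lemma set_norm_le_N:
  fixes F f :: "real \<Rightarrow> complex"
  assumes F: "integrable lborel F" and f: "integrable lborel f" and S: "S \<in> sets lborel"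
    and c: "c \<ge> 0" and b: "\<And>y. y \<in> S \<Longrightarrow> norm (F y) \<le> c * norm (f y)"
  shows "norm (LINT y:S|lborel. F y) \<le> c * (LINT y|lborel. norm (f y))"
proof -
  have Fs: "set_integrable lborel S F" unfolding set_integrable_def by (rule integrable_mult_indicator[OF S F])
  have fs: "set_integrable lborel S (\<lambda>y. c * norm (f y))" unfolding set_integrable_def
    by (rule integrable_mult_indicator[OF S]) (intro integrable_mult_right integrable_norm f)
  have "norm (LINT y:S|lborel. F y) \<le> (LINT y:S|lborel. norm (F y))"
    by (rule set_integral_norm_bound[OF Fs])
  also have "\<dots> \<le> (LINT y:S|lborel. c * norm (f y))"
    by (rule set_integral_mono[OF set_integrable_norm[OF Fs] fs b])
  also have "\<dots> \<le> (LINT y|lborel. c * norm (f y))"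
    unfolding set_lebesgue_integral_def
  proof (rule integral_mono)
    show "integrable lborel (\<lambda>x. indicator S x *\<^sub>R (c * norm (f x)))" using fs by (simp add: set_integrable_def)
    show "integrable lborel (\<lambda>x. c * norm (f x))" by (intro integrable_mult_right integrable_norm f)
    fix x show "indicator S x *\<^sub>R (c * norm (f x)) \<le> c * norm (f x)" using c by (auto simp: indicator_def)
  qed
  also have "\<dots> = c * (LINT y|lborel. norm (f y))" by simp
  finally show ?thesis .
qed




lemma powr_neg_eq: "(x::real) > 0 \<Longrightarrow> C / x powr (1+p) = C * x powr (-1-p)"
proof -
  assume "x > 0"
  have "x powr (-1-p) = x powr (-(1+p))" by simp
  also have "\<dots> = inverse (x powr (1+p))" by (rule powr_minus)
  finally show ?thesis by (simp add: divide_inverse)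
qed

lemma tail_left_bound:
  fixes F :: "real \<Rightarrow> complex"
  assumes F: "integrable lborel F" and a: "a < 0" and p: "p > 0"
   and b: "\<And>y. y < a \<Longrightarrow> norm (F y) \<le> C / (-y) powr (1+p)"
  shows "norm (LINT y:{..<a}|lborel. F y) \<le> C * (-a) powr (-p) / p"
proof -
  have Fs: "set_integrable lborel {..<a} F" unfolding set_integrable_def by (rule integrable_mult_indicator[OF _ F]) auto
  note T = tail_left_powr[of "-a" p]
  have gs: "set_integrable lborel {..<a} (\<lambda>y. C * (-y) powr (-1-p))"
    using T(1) a p by (simp add: set_integrable_mult_right)
  have "norm (LINT y:{..<a}|lborel. F y) \<le> (LINT y:{..<a}|lborel. norm (F y))"
    by (rule set_integral_norm_bound[OF Fs])
  also have "\<dots> \<le> (LINT y:{..<a}|lborel. C * (-y) powr (-1-p))"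
  proof (rule set_integral_mono[OF set_integrable_norm[OF Fs] gs])
    fix y assume "y \<in> {..<a}"
    then have "y < a" by simp
    then show "norm (F y) \<le> C * (-y) powr (-1-p)" using b[of y] powr_neg_eq[of "-y" C p] a by simp
  qed
  also have "\<dots> = C * (LINT y:{..<a}|lborel. (-y) powr (-1-p))"
    by (simp add: set_integral_mult_right)
  also have "\<dots> = C * (-a) powr (-p) / p" using T(2) a p by simp
  finally show ?thesis .
qed

lemma tail_right_bound:
  fixes F :: "real \<Rightarrow> complex"
  assumes F: "integrable lborel F" and a: "a > 0" and p: "p > 0"
   and b: "\<And>y. y > a \<Longrightarrow> norm (F y) \<le> C / y powr (1+p)"
  shows "norm (LINT y:{a<..}|lborel. F y) \<le> C * a powr (-p) / p"
proof -
  have Fs: "set_integrable lborel {a<..} F" unfolding set_integrable_def by (rule integrable_mult_indicator[OF _ F]) auto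
  note T = tail_right_powr[of a p]
  have gs: "set_integrable lborel {a<..} (\<lambda>y. C * y powr (-1-p))"
    using T(1) a p by (simp add: set_integrable_mult_right)
  have "norm (LINT y:{a<..}|lborel. F y) \<le> (LINT y:{a<..}|lborel. norm (F y))"
    by (rule set_integral_norm_bound[OF Fs])
  also have "\<dots> \<le> (LINT y:{a<..}|lborel. C * y powr (-1-p))"
  proof (rule set_integral_mono[OF set_integrable_norm[OF Fs] gs])
    fix y assume "y \<in> {a<..}"
    then have "y > a" by simp
    then show "norm (F y) \<le> C * y powr (-1-p)" using b[of y] powr_neg_eq[of y C p] a by simp
  qed
  also have "\<dots> = C * (LINT y:{a<..}|lborel. y powr (-1-p))"
    by (simp add: set_integral_mult_right)
  also have "\<dots> = C * a powr (-p) / p" using T(2) a p by simp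
  finally show ?thesis .
qed




lemma h_sqrt: "(k::real) > 0 \<Longrightarrow> exp (ln k / 2) = sqrt k"
proof -
  assume k: "k > 0"
  have "exp (ln k / 2) = k powr (1/2)" using k by (simp add: powr_def)
  also have "\<dots> = sqrt k" using k by (simp add: powr_half_sqrt)
  finally show ?thesis .
qed

lemma h_negpow:
  fixes k e t :: real assumes k: "k > 0" and e: "e > 0" and t: "t \<ge> k powr (1/(2*e))"
  shows "t powr (-e) \<le> 1 / sqrt k"
proof -
  have kp: "k powr (1/(2*e)) > 0" using k by simp
  have "t powr (-e) \<le> (k powr (1/(2*e))) powr (-e)"
    using powr_mono2'[of "-e" "k powr (1/(2*e))" t] e kp t by linarith
  also have "\<dots> = k powr ((1/(2*e)) * (-e))" by (rule powr_powr)
  also have "(1/(2*e)) * (-e) = -(1/2)" using e by simp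
  also have "k powr (-(1/2)) = inverse (k powr (1/2))" by (rule powr_minus)
  also have "k powr (1/2) = sqrt k" using k by (intro powr_half_sqrt) simp
  also have "inverse (sqrt k) = 1 / sqrt k" by (rule inverse_eq_divide)
  finally show ?thesis .
qed

lemma h_Y:
  fixes k a :: real assumes "ln k / 2 > 0"
  shows "(ln k / 2) powr (-a) = 2 powr a / (ln k) powr a"
proof -
  have "(ln k / 2) powr (-a) = inverse ((ln k / 2) powr a)" by (rule powr_minus)
  also have "(ln k / 2) powr a = (ln k) powr a / 2 powr a" by (rule powr_divide)
  also have "inverse ((ln k) powr a / 2 powr a) = 2 powr a / (ln k) powr a" by (rule inverse_divide)
  finally show ?thesis .
qed

lemma h_dec:
  fixes C y p :: real assumes "C \<ge> 0" "y \<ge> 1" "p > 0"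
  shows "C / y powr (1+p) \<le> C"
proof -
  have "y powr (1+p) \<ge> 1" using assms by (simp add: ge_one_powr_ge_zero)
  then have "C / y powr (1+p) \<le> C / 1"
    using assms by (intro divide_left_mono) auto
  then show ?thesis by simp
qed





lemma large_k:
  fixes f f' :: "real \<Rightarrow> complex" and psi w w' :: "real \<Rightarrow> real" and Cm Cp L \<alpha> \<epsilon> :: real
  assumes f_int: "integrable lborel f"
    and f_deriv: "\<And>y. (f has_vector_derivative f' y) (at y)"
    and f'_int: "integrable lborel f'"
    and Cm_pos: "Cm > 0" and Cp_pos: "Cp > 0"
    and L_gt: "L > 1" and \<alpha>_pos: "\<alpha> > 0" and \<epsilon>_pos: "\<epsilon> > 0"
    and decay_minus: "\<And>y. y \<le> - L \<Longrightarrow> norm (f y) \<le> Cm / (- y) powr (1 + \<epsilon>)"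
    and decay_plus: "\<And>y. y \<ge> L \<Longrightarrow> norm (f y) \<le> Cp / y powr (1 + \<alpha>)"
    and wd: "\<And>y. (w has_real_derivative w' y) (at y)" and w'c: "continuous_on UNIV w'"
    and pd: "\<And>y. (psi has_real_derivative 1 / w y) (at y)" and wpos: "\<And>y. w y > 0"
    and wb: "\<And>y Y. y \<le> Y \<Longrightarrow> 0 \<le> Y \<Longrightarrow> \<bar>w y\<bar> \<le> 2 * exp Y \<and> \<bar>w' y\<bar> \<le> 2 * exp Y"
  shows "\<exists>M. \<forall>\<^sub>F k in at_top. norm (LINT y|lborel. f y * cis (k * psi y))
            \<le> 2 powr \<alpha> * Cp / (\<alpha> * (ln k) powr \<alpha>) + M / sqrt k"
proof -
  define N where "N = (LINT y|lborel. norm (f y))"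
  define N' where "N' = (LINT y|lborel. norm (f' y))"
  have N0: "N \<ge> 0" unfolding N_def by simp
  have N'0: "N' \<ge> 0" unfolding N'_def by simp
  define M where "M = 2 * (Cp + Cm + N' + N) + Cm / \<epsilon>"
  have pc: "continuous_on UNIV psi"
    using pd by (meson DERIV_isCont continuous_at_imp_continuous_on)
  have fm: "f \<in> borel_measurable lborel" using f_int by auto
  have ev1: "\<forall>\<^sub>F k in at_top. (1::real) \<le> k" by real_asymp
  have ev2: "\<forall>\<^sub>F k in at_top. L \<le> ln k / 2" by real_asymp
  have ev: "\<forall>\<^sub>F k in at_top. 1 \<le> k \<and> L \<le> ln k / 2"
    using eventually_conj[OF ev1 ev2] .
  show ?thesis
  proof (rule exI[of _ M], rule eventually_mono[OF ev], elim conjE)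
    fix k :: real assume k1: "1 \<le> k" and kL: "L \<le> ln k / 2"
    define Y where "Y = ln k / 2"
    define a where "a = - (L + k powr (1 / (2 * \<epsilon>)))"
    have k0: "k > 0" using k1 by simp
    have YL: "L \<le> Y" using kL unfolding Y_def .
    have kp: "k powr (1 / (2 * \<epsilon>)) > 0" using k0 by simp
    have aL: "a \<le> - L" unfolding a_def using kp by simp
    have a0: "a < 0" using aL L_gt by simp
    have aY: "a \<le> Y" using aL YL L_gt by simp
    define F where "F y = f y * cis (k * psi y)" for y
    have cism: "(\<lambda>y. cis (k * psi y)) \<in> borel_measurable lborel"
    proof -
      have "continuous_on UNIV (\<lambda>y. cis (k * psi y))" using pc by (auto intro!: continuous_intros)
      from borel_measurable_continuous_onI[OF this] show ?thesis by simp
    qed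
    have F_int: "integrable lborel F"
      unfolding F_def
    proof (rule Bochner_Integration.integrable_bound[OF f_int])
      show "(\<lambda>y. f y * cis (k * psi y)) \<in> borel_measurable lborel"
        by (rule borel_measurable_times[OF fm cism])
    qed (auto simp: norm_mult)
    have nF: "norm (F y) = norm (f y)" for y unfolding F_def by (simp add: norm_mult)
    have sp: "(LINT y|lborel. F y) = (LINT y:{..<a}|lborel. F y) + (LINT y:{a..Y}|lborel. F y) + (LINT y:{Y<..}|lborel. F y)"
      by (rule split3[OF F_int aY])
    have t1: "norm (LINT y:{..<a}|lborel. F y) \<le> Cm * (-a) powr (-\<epsilon>) / \<epsilon>"
      by (rule tail_left_bound[OF F_int a0 \<epsilon>_pos]) (use aL decay_minus nF in auto)
    have "(-a) powr (-\<epsilon>) \<le> 1 / sqrt k"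
      by (rule h_negpow[OF k0 \<epsilon>_pos]) (use L_gt in \<open>simp add: a_def\<close>)
    then have t1': "norm (LINT y:{..<a}|lborel. F y) \<le> Cm / \<epsilon> * (1 / sqrt k)"
    proof -
      have "Cm * (-a) powr (-\<epsilon>) / \<epsilon> \<le> Cm * (1 / sqrt k) / \<epsilon>"
        using \<open>(-a) powr (-\<epsilon>) \<le> 1 / sqrt k\<close> Cm_pos \<epsilon>_pos
        by (intro divide_right_mono mult_left_mono) auto
      moreover have "Cm * (1 / sqrt k) / \<epsilon> = Cm / \<epsilon> * (1 / sqrt k)" by simp
      ultimately show ?thesis using t1 by linarith
    qed
    define B where "B = 2 * sqrt k"
    have eY: "exp Y = sqrt k" unfolding Y_def by (rule h_sqrt[OF k0])
    have Y0: "0 \<le> Y" using YL L_gt by simp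
    have Bb: "\<bar>w y\<bar> \<le> B \<and> \<bar>w' y\<bar> \<le> B" if "a \<le> y" "y \<le> Y" for y
      using wb[OF that(2) Y0] eY unfolding B_def by simp
    have t2: "norm (LINT y:{a..Y}|lborel. F y) \<le> (norm (f Y) * w Y + norm (f a) * w a + B * N' + B * N) / k"
      unfolding F_def N_def N'_def
      by (rule ibp_bound[OF k0 aY f_deriv f_int f'_int wd w'c pd wpos Bb])
    have fY: "norm (f Y) \<le> Cp"
      using decay_plus[OF YL] h_dec[of Cp Y \<alpha>] Cp_pos YL L_gt \<alpha>_pos by simp
    have fa: "norm (f a) \<le> Cm"
      using decay_minus[OF aL] h_dec[of Cm "-a" \<epsilon>] Cm_pos aL L_gt \<epsilon>_pos by simp
    have wY: "w Y \<le> B" using Bb[OF aY order_refl] by (simp add: abs_le_iff)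
    have wa: "w a \<le> B" using Bb[OF order_refl aY] by (simp add: abs_le_iff)
    have "norm (f Y) * w Y + norm (f a) * w a + B * N' + B * N \<le> Cp * B + Cm * B + B * N' + B * N"
      using fY fa wY wa wpos[of Y] wpos[of a] Cp_pos Cm_pos
      by (intro add_mono mult_mono order_refl) auto
    then have "(norm (f Y) * w Y + norm (f a) * w a + B * N' + B * N) / k \<le> (Cp * B + Cm * B + B * N' + B * N) / k"
      using k0 by (simp add: divide_right_mono)
    also have "\<dots> = 2 * (Cp + Cm + N' + N) * (sqrt k / k)" unfolding B_def by (simp add: field_simps)
    also have "sqrt k / k = 1 / sqrt k"
    proof -
      have sk: "sqrt k > 0" using k0 by simp
      have "k = sqrt k * sqrt k" using k0 by simp
      then have "sqrt k / k = sqrt k / (sqrt k * sqrt k)" by (rule arg_cong[where f="\<lambda>x. sqrt k / x"])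
      also have "\<dots> = 1 / sqrt k" using sk by (intro nonzero_divide_mult_cancel_left) simp
      finally show ?thesis .
    qed
    finally have t2': "norm (LINT y:{a..Y}|lborel. F y) \<le> 2 * (Cp + Cm + N' + N) * (1 / sqrt k)"
      using t2 by simp
    have Yp: "Y > 0" using YL L_gt by simp
    have t3: "norm (LINT y:{Y<..}|lborel. F y) \<le> Cp * Y powr (-\<alpha>) / \<alpha>"
      by (rule tail_right_bound[OF F_int Yp \<alpha>_pos]) (use YL decay_plus nF in auto)
    have "Y powr (-\<alpha>) = 2 powr \<alpha> / (ln k) powr \<alpha>" unfolding Y_def by (rule h_Y) (use Yp Y_def in simp)
    then have t3': "norm (LINT y:{Y<..}|lborel. F y) \<le> 2 powr \<alpha> * Cp / (\<alpha> * (ln k) powr \<alpha>)"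
      using t3 by (simp add: field_simps)
    have "norm (LINT y|lborel. F y) \<le> norm (LINT y:{..<a}|lborel. F y) + norm (LINT y:{a..Y}|lborel. F y) + norm (LINT y:{Y<..}|lborel. F y)"
      unfolding sp by (rule order_trans[OF norm_triangle_ineq]) (simp add: norm_triangle_ineq)
    also have "\<dots> \<le> Cm / \<epsilon> * (1 / sqrt k) + 2 * (Cp + Cm + N' + N) * (1 / sqrt k) + 2 powr \<alpha> * Cp / (\<alpha> * (ln k) powr \<alpha>)"
      using t1' t2' t3' by linarith
    also have "\<dots> = 2 powr \<alpha> * Cp / (\<alpha> * (ln k) powr \<alpha>) + M / sqrt k"
      unfolding M_def by (simp add: add_divide_distrib)
    finally show "norm (LINT y|lborel. f y * cis (k * psi y)) \<le> 2 powr \<alpha> * Cp / (\<alpha> * (ln k) powr \<alpha>) + M / sqrt k"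
      unfolding F_def .
  qed
qed



lemma integrable_fcis:
  fixes f :: "real \<Rightarrow> complex"
  assumes f: "integrable lborel f" and c: "continuous_on UNIV \<phi>"
  shows "integrable lborel (\<lambda>y. f y * cis (\<phi> y))"
proof (rule Bochner_Integration.integrable_bound[OF f])
  have fm: "f \<in> borel_measurable lborel" using f by auto
  have "continuous_on UNIV (\<lambda>y. cis (\<phi> y))" using c by (auto intro!: continuous_intros)
  from borel_measurable_continuous_onI[OF this] have "(\<lambda>y. cis (\<phi> y)) \<in> borel_measurable lborel" by simp
  then show "(\<lambda>y. f y * cis (\<phi> y)) \<in> borel_measurable lborel"
    by (rule borel_measurable_times[OF fm])
qed (auto simp: norm_mult)

lemma integrable_fcis1:
  fixes f :: "real \<Rightarrow> complex"
  assumes f: "integrable lborel f" and c: "continuous_on UNIV \<phi>" and f0: "(LINT y|lborel. f y) = 0"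
  shows "integrable lborel (\<lambda>y. f y * (cis (\<phi> y) - 1))"
    and "(LINT y|lborel. f y * cis (\<phi> y)) = (LINT y|lborel. f y * (cis (\<phi> y) - 1))"
proof -
  have i: "integrable lborel (\<lambda>y. f y * cis (\<phi> y))" by (rule integrable_fcis[OF f c])
  have e: "(\<lambda>y. f y * (cis (\<phi> y) - 1)) = (\<lambda>y. f y * cis (\<phi> y) - f y)" by (simp add: algebra_simps)
  show "integrable lborel (\<lambda>y. f y * (cis (\<phi> y) - 1))" unfolding e using i f by simp
  show "(LINT y|lborel. f y * cis (\<phi> y)) = (LINT y|lborel. f y * (cis (\<phi> y) - 1))"
    unfolding e using i f f0 by simp
qed

lemma norm_c_half: "norm (complex_of_real (1 / sqrt (2 * pi)) * z) \<le> norm z / 2"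
proof -
  have "sqrt (2 * pi) \<ge> sqrt 4" using pi_gt3 by (intro real_sqrt_le_mono) simp
  then have s: "sqrt (2 * pi) \<ge> 2" by simp
  have "norm (complex_of_real (1 / sqrt (2 * pi)) * z) = \<bar>1 / sqrt (2 * pi)\<bar> * norm z"
    by (simp only: norm_mult norm_of_real)
  also have "\<dots> = norm z / sqrt (2 * pi)" by simp
  also have "\<dots> \<le> norm z / 2" using s by (intro divide_left_mono) auto
  finally show ?thesis .
qed

lemma FT0_int: assumes "FT f 0 = 0" shows "(LINT y|lborel. f y) = 0"
  using assms by (simp add: FT_def)

lemma small_k_Th:
  fixes f :: "real \<Rightarrow> complex" and Cm L \<epsilon> :: real
  assumes f_int: "integrable lborel f" and f0: "(LINT y|lborel. f y) = 0"
    and Cm_pos: "Cm > 0" and L_gt: "L > 1" and \<epsilon>_pos: "\<epsilon> > 0"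
    and decay_minus: "\<And>y. y \<le> - L \<Longrightarrow> norm (f y) \<le> Cm / (- y) powr (1 + \<epsilon>)"
  shows "\<exists>M. \<forall>\<^sub>F k in at_right 0.
        norm (checkFT_Th f k) \<le> 3 * Cm / (\<epsilon> * (- ln k) powr \<epsilon>) + M * k"
proof -
  define N where "N = (LINT y|lborel. norm (f y))"
  have N0: "N \<ge> 0" unfolding N_def by simp
  define r where "r = 2 powr (-1/\<epsilon>)"
  have r0: "r > 0" unfolding r_def by simp
  have r1: "r < 1" unfolding r_def using \<epsilon>_pos by (simp add: powr_less_one)
  have rp: "r powr (-\<epsilon>) = 2" unfolding r_def using \<epsilon>_pos by (simp add: powr_powr)
  define K where "K = Cm / (\<epsilon> * (N + 1))"
  have K0: "K > 0" unfolding K_def using Cm_pos \<epsilon>_pos N0 by simp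
  have e1: "\<forall>\<^sub>F k in at_right 0. (0::real) < k" by real_asymp
  have e2: "\<forall>\<^sub>F k in at_right 0. (k::real) < 1" by real_asymp
  have e3: "\<forall>\<^sub>F k in at_right 0. L \<le> r * (- ln k)" using r0 by real_asymp
  have "((\<lambda>k. k powr (1 - r) * (- ln k) powr \<epsilon>) \<longlongrightarrow> 0) (at_right 0)"
    using r1 \<epsilon>_pos by real_asymp
  then have e4: "\<forall>\<^sub>F k in at_right 0. k powr (1 - r) * (- ln k) powr \<epsilon> < K"
    using K0 by (rule order_tendstoD)
  show ?thesis
  proof (rule exI[of _ 0], rule eventually_mono[OF eventually_conj[OF e1 eventually_conj[OF e2 eventually_conj[OF e3 e4]]]], elim conjE)
    fix k :: real assume k0: "0 < k" and k1: "k < 1" and kL: "L \<le> r * (- ln k)"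
      and kK: "k powr (1 - r) * (- ln k) powr \<epsilon> < K"
    define T where "T = - ln k"
    have T0: "T > 0" unfolding T_def using k0 k1 by simp
    define b where "b = r * T"
    have bL: "L \<le> b" using kL unfolding b_def T_def .
    have b0: "b > 0" using bL L_gt by simp
    define G where "G y = f y * (cis (- k * exp (- y)) - 1)" for y
    have cc: "continuous_on UNIV (\<lambda>y. - k * exp (- y))" by (intro continuous_intros)
    note GG = integrable_fcis1[OF f_int cc f0]
    have G_int: "integrable lborel G" unfolding G_def by (rule GG(1))
    have sp: "(LINT y|lborel. G y) = (LINT y:{..< -b}|lborel. G y) + (LINT y:{-b..-b}|lborel. G y) + (LINT y:{-b<..}|lborel. G y)"
      by (rule split3[OF G_int]) simp
    have Gb2: "norm (G y) \<le> 2 * norm (f y)" for y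
    proof -
      have "norm (G y) = norm (f y) * norm (cis (- k * exp (- y)) - 1)" unfolding G_def by (simp only: norm_mult)
      also have "\<dots> \<le> norm (f y) * 2" by (intro mult_left_mono cis_minus_one_le2) simp
      finally show ?thesis by simp
    qed
    have Gb1: "norm (G y) \<le> (k * exp b) * norm (f y)" if "y \<ge> -b" for y
    proof -
      have a1: "norm (G y) \<le> norm (f y) * \<bar>- k * exp (- y)\<bar>"
        unfolding G_def norm_mult by (intro mult_left_mono cis_minus_one_le) simp
      have a2: "\<bar>- k * exp (- y)\<bar> \<le> k * exp b" using that k0 by simp
      have "norm (G y) \<le> norm (f y) * (k * exp b)"
        using a1 mult_left_mono[OF a2 norm_ge_zero[of "f y"]] by linarith
      then show ?thesis by (simp add: mult.commute)
    qed
    have t1: "norm (LINT y:{..< -b}|lborel. G y) \<le> 2 * Cm * (-(-b)) powr (-\<epsilon>) / \<epsilon>"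
    proof (rule tail_left_bound[OF G_int _ \<epsilon>_pos])
      show "- b < 0" using b0 by simp
      fix y :: real assume "y < -b"
      then have "y \<le> -L" using bL by simp
      then show "norm (G y) \<le> 2 * Cm / (- y) powr (1 + \<epsilon>)"
        using Gb2[of y] decay_minus[of y] by simp
    qed
    have "b powr (-\<epsilon>) = r powr (-\<epsilon>) * T powr (-\<epsilon>)" unfolding b_def using r0 T0 by (simp add: powr_mult)
    also have "\<dots> = 2 / T powr \<epsilon>" using rp by (simp add: powr_minus divide_inverse)
    finally have bp: "b powr (-\<epsilon>) = 2 / T powr \<epsilon>" .
    have t1': "norm (LINT y:{..< -b}|lborel. G y) \<le> 4 * Cm / (\<epsilon> * T powr \<epsilon>)"
      using t1 bp by (simp add: mult.commute)
    have t2: "norm (LINT y:{-b..-b}|lborel. G y) \<le> (k * exp b) * N"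
      unfolding N_def by (rule set_norm_le_N[OF G_int f_int]) (use Gb1 k0 in auto)
    have t3: "norm (LINT y:{-b<..}|lborel. G y) \<le> (k * exp b) * N"
      unfolding N_def by (rule set_norm_le_N[OF G_int f_int]) (use Gb1 k0 in auto)
    have kb: "k * exp b = k powr (1 - r)"
    proof -
      have "exp b = k powr (- r)" unfolding b_def T_def using k0 by (simp add: powr_def)
      then show ?thesis using k0 by (simp add: powr_diff powr_minus divide_inverse)
    qed
    have "norm (LINT y|lborel. G y) \<le> 4 * Cm / (\<epsilon> * T powr \<epsilon>) + 2 * (k powr (1 - r) * N)"
      unfolding sp using t1' t2[unfolded kb] t3[unfolded kb] norm_triangle_ineq[of "(LINT y:{..< -b}|lborel. G y) + (LINT y:{-b..-b}|lborel. G y)" "(LINT y:{-b<..}|lborel. G y)"]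
        norm_triangle_ineq[of "(LINT y:{..< -b}|lborel. G y)" "(LINT y:{-b..-b}|lborel. G y)"]
      by linarith
    moreover have "k powr (1 - r) * N \<le> Cm / (\<epsilon> * T powr \<epsilon>)"
    proof -
      have Tp: "T powr \<epsilon> > 0" using T0 by simp
      have "k powr (1 - r) * T powr \<epsilon> * (N + 1) \<le> K * (N + 1)"
        using kK N0 unfolding T_def by (intro mult_right_mono) auto
      also have "\<dots> = Cm / \<epsilon>" unfolding K_def using N0 by simp
      finally have h: "k powr (1 - r) * T powr \<epsilon> * (N + 1) \<le> Cm / \<epsilon>" .
      have h': "(k powr (1 - r) * (N + 1)) * T powr \<epsilon> \<le> Cm / \<epsilon>"
        using h by (simp add: ac_simps)
      have "k powr (1 - r) * (N + 1) \<le> Cm / \<epsilon> / T powr \<epsilon>"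
        by (subst pos_le_divide_eq[OF Tp]) (rule h')
      moreover have "k powr (1 - r) * N \<le> k powr (1 - r) * (N + 1)" by (simp add: mult_left_mono)
      ultimately show ?thesis by simp
    qed
    ultimately have nG: "norm (LINT y|lborel. G y) \<le> 6 * Cm / (\<epsilon> * T powr \<epsilon>)"
      by simp
    have "norm (checkFT_Th f k) \<le> norm (LINT y|lborel. G y) / 2"
      unfolding checkFT_Th_def G_def GG(2)[symmetric] by (rule norm_c_half)
    also have "\<dots> \<le> 3 * Cm / (\<epsilon> * T powr \<epsilon>)" using nG by simp
    finally show "norm (checkFT_Th f k) \<le> 3 * Cm / (\<epsilon> * (- ln k) powr \<epsilon>) + 0 * k"
      unfolding T_def by simp
  qed
qed



lemma ln_bound: "(u::real) \<ge> 1 \<Longrightarrow> ln (1 + exp u) \<le> 2 * u"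
proof -
  assume u: "u \<ge> 1"
  have e2: "exp u \<ge> 2" using exp_ge_add_one_self[of u] u by linarith
  have m: "2 * exp u \<le> exp u * exp u" using e2 by (intro mult_right_mono) auto
  have "1 + exp u \<le> exp u * exp u" using m e2 by linarith
  also have "\<dots> = exp (2 * u)" by (simp add: exp_add[symmetric])
  finally have "1 + exp u \<le> exp (2 * u)" .
  then have "ln (1 + exp u) \<le> ln (exp (2 * u))" by (intro ln_mono) (auto intro: add_pos_pos)
  then show ?thesis by simp
qed

lemma small_k_check:
  fixes f :: "real \<Rightarrow> complex" and Cm L \<epsilon> :: real
  assumes f_int: "integrable lborel f" and f0: "(LINT y|lborel. f y) = 0"
    and Cm_pos: "Cm > 0" and L_gt: "L > 1" and \<epsilon>_pos: "\<epsilon> > 0"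
    and decay_minus: "\<And>y. y \<le> - L \<Longrightarrow> norm (f y) \<le> Cm / (- y) powr (1 + \<epsilon>)"
  shows "\<exists>C>0. \<exists>M. \<forall>\<^sub>F k in at_right 0.
        norm (checkFT f k) \<le> C * k powr (qexp \<epsilon>) + M * k"
proof -
  define q where "q = qexp \<epsilon>"
  have q0: "q > 0" and qh: "q \<le> 1/2" and qe: "q \<le> \<epsilon>"
    unfolding q_def qexp_def using \<epsilon>_pos by auto
  define N where "N = (LINT y|lborel. norm (f y))"
  have N0: "N \<ge> 0" unfolding N_def by simp
  define c0 where "c0 = ln (1 + exp L)"
  have c00: "c0 \<ge> 0" unfolding c0_def by simp
  define C where "C = 2 * Cm / q + 2 * Cm / (1 - q)"
  have C0: "C > 0" unfolding C_def using Cm_pos q0 qh by (intro add_pos_pos divide_pos_pos) auto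
  have dq: "norm (f y) \<le> Cm / (- y) powr (1 + q)" if "y \<le> -L" for y
  proof -
    have u: "-y \<ge> 1" using that L_gt by simp
    have "(- y) powr (1 + q) \<le> (- y) powr (1 + \<epsilon>)" using u qe by (intro powr_mono) auto
    then have "Cm / (- y) powr (1 + \<epsilon>) \<le> Cm / (- y) powr (1 + q)"
      using u Cm_pos by (intro divide_left_mono) auto
    then show ?thesis using decay_minus[OF that] by linarith
  qed
  have e1: "\<forall>\<^sub>F k in at_right 0. (0::real) < k" by real_asymp
  have e2: "\<forall>\<^sub>F k in at_right 0. L \<le> 1 / k" by real_asymp
  show ?thesis
  proof (rule exI[of _ C], intro conjI C0 exI[of _ "c0 * N"], rule eventually_mono[OF eventually_conj[OF e1 e2]], elim conjE)
    fix k :: real assume k0: "0 < k" and kL: "L \<le> 1 / k"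
    define a where "a = 1 / k"
    have aL: "L \<le> a" using kL unfolding a_def .
    define G where "G y = f y * (cis (k * xvar y) - 1)" for y
    have cc: "continuous_on UNIV (\<lambda>y. k * xvar y)"
    proof -
      have ne: "\<And>x::real. 1 + exp (- x) \<noteq> 0" by (smt (verit) exp_gt_zero)
      show ?thesis unfolding xvar_def by (intro continuous_intros) (use ne in auto)
    qed
    note GG = integrable_fcis1[OF f_int cc f0]
    have G_int: "integrable lborel G" unfolding G_def by (rule GG(1))
    have aL': "-a \<le> -L" using aL by simp
    have sp: "(LINT y|lborel. G y) = (LINT y:{..< -a}|lborel. G y) + (LINT y:{-a..-L}|lborel. G y) + (LINT y:{-L<..}|lborel. G y)"
      by (rule split3[OF G_int aL'])
    have Gb2: "norm (G y) \<le> 2 * norm (f y)" for y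
    proof -
      have "norm (G y) = norm (f y) * norm (cis (k * xvar y) - 1)" unfolding G_def by (simp only: norm_mult)
      also have "\<dots> \<le> norm (f y) * 2" by (intro mult_left_mono cis_minus_one_le2) simp
      finally show ?thesis by simp
    qed
    have Gb1: "norm (G y) \<le> norm (f y) * (k * ln (1 + exp (- y)))" for y
    proof -
      have "norm (G y) = norm (f y) * norm (cis (k * xvar y) - 1)" unfolding G_def by (simp only: norm_mult)
      also have "\<dots> \<le> norm (f y) * \<bar>k * xvar y\<bar>" by (intro mult_left_mono cis_minus_one_le) simp
      also have "\<bar>k * xvar y\<bar> = k * ln (1 + exp (- y))"
      proof -
        have "ln (1 + exp (- y)) \<ge> 0" by simp
        then show ?thesis unfolding xvar_def using k0 by (simp add: abs_mult)
      qed
      finally show ?thesis .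
    qed
    have a0: "a > 0" using aL L_gt by simp
    have t1: "norm (LINT y:{..< -a}|lborel. G y) \<le> 2 * Cm * (-(-a)) powr (-q) / q"
    proof (rule tail_left_bound[OF G_int _ q0])
      show "- a < 0" using a0 by simp
      fix y :: real assume "y < -a"
      then have "y \<le> -L" using aL by simp
      then show "norm (G y) \<le> 2 * Cm / (- y) powr (1 + q)"
        using Gb2[of y] dq[of y] by simp
    qed
    have ap: "a powr (-q) = k powr q" unfolding a_def using k0
      by (simp add: powr_minus powr_divide)
    have t1': "norm (LINT y:{..< -a}|lborel. G y) \<le> 2 * Cm / q * k powr q"
      using t1 ap by simp
    note FP = fin_powr[of L a q]
    have fp1: "set_integrable lborel {-a..-L} (\<lambda>y. (-y) powr (-q))" using FP(1) L_gt aL q0 qh by simp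
    have fp2: "(LINT y:{-a..-L}|lborel. (-y) powr (-q)) \<le> a powr (1-q) / (1-q)" using FP(2) L_gt aL q0 qh by simp
    have Gs: "set_integrable lborel {-a..-L} G" unfolding set_integrable_def
      by (rule integrable_mult_indicator[OF _ G_int]) simp
    have Gb3: "norm (G y) \<le> 2 * k * Cm * (-y) powr (-q)" if "y \<in> {-a..-L}" for y
    proof -
      have yL: "y \<le> -L" using that by simp
      have u: "-y \<ge> 1" using yL L_gt by simp
      have "norm (G y) \<le> norm (f y) * (k * ln (1 + exp (- y)))" by (rule Gb1)
      also have "\<dots> \<le> Cm / (- y) powr (1 + q) * (k * (2 * (-y)))"
        using dq[OF yL] ln_bound[OF u] k0 Cm_pos by (intro mult_mono) auto
      also have "Cm / (- y) powr (1 + q) * (k * (2 * (-y))) = 2 * k * Cm * ((-y) / (- y) powr (1 + q))"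
        by simp
      also have "(-y) / (- y) powr (1 + q) = (-y) powr (-q)"
      proof -
        have "(- y) powr (1 + q) = (-y) * (-y) powr q" using u by (simp add: powr_add)
        then show ?thesis using u by (simp add: powr_minus divide_inverse)
      qed
      finally show ?thesis .
    qed
    have "norm (LINT y:{-a..-L}|lborel. G y) \<le> (LINT y:{-a..-L}|lborel. norm (G y))"
      by (rule set_integral_norm_bound[OF Gs])
    also have "\<dots> \<le> (LINT y:{-a..-L}|lborel. 2 * k * Cm * (-y) powr (-q))"
      by (rule set_integral_mono[OF set_integrable_norm[OF Gs] set_integrable_mult_right[OF fp1] Gb3])
    also have "\<dots> = 2 * k * Cm * (LINT y:{-a..-L}|lborel. (-y) powr (-q))"
      by (simp add: set_integral_mult_right)
    also have "\<dots> \<le> 2 * k * Cm * (a powr (1-q) / (1-q))"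
      using fp2 k0 Cm_pos by (intro mult_left_mono) auto
    also have "k * a powr (1-q) = k powr q"
    proof -
      have A: "a powr (1-q) = inverse (k powr (1-q))"
        unfolding a_def by (simp only: divide_inverse mult_1) (rule inverse_powr)
      have "k powr (1 - (1-q)) = k powr 1 / k powr (1-q)" by (rule powr_diff)
      then have "k powr q = k / k powr (1-q)" using k0 by simp
      then show ?thesis using A by (simp add: divide_inverse)
    qed
    then have "2 * k * Cm * (a powr (1-q) / (1-q)) = 2 * Cm / (1 - q) * k powr q"
      by (metis (no_types, lifting) mult.commute mult.left_commute times_divide_eq_left times_divide_eq_right)
    finally have t2: "norm (LINT y:{-a..-L}|lborel. G y) \<le> 2 * Cm / (1 - q) * k powr q" .
    have t3: "norm (LINT y:{-L<..}|lborel. G y) \<le> (k * c0) * N"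
      unfolding N_def
    proof (rule set_norm_le_N[OF G_int f_int])
      fix y :: real assume "y \<in> {-L<..}"
      then have "- y \<le> L" by simp
      then have "ln (1 + exp (- y)) \<le> c0" unfolding c0_def by (intro ln_mono) (auto intro: add_pos_pos)
      then have "norm (f y) * (k * ln (1 + exp (- y))) \<le> norm (f y) * (k * c0)"
        using k0 by (intro mult_left_mono) auto
      then show "norm (G y) \<le> k * c0 * norm (f y)" using Gb1[of y] by (simp add: mult.commute)
    qed (use k0 c00 in auto)
    have nG: "norm (LINT y|lborel. G y) \<le> 2 * Cm / q * k powr q + 2 * Cm / (1 - q) * k powr q + (k * c0) * N"
      unfolding sp using t1' t2 t3 norm_triangle_ineq[of "(LINT y:{..< -a}|lborel. G y) + (LINT y:{-a..-L}|lborel. G y)" "(LINT y:{-L<..}|lborel. G y)"]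
        norm_triangle_ineq[of "(LINT y:{..< -a}|lborel. G y)" "(LINT y:{-a..-L}|lborel. G y)"]
      by linarith
    have "norm (checkFT f k) \<le> norm (LINT y|lborel. G y) / 2"
      unfolding checkFT_def G_def GG(2)[symmetric] by (rule norm_c_half)
    also have "\<dots> \<le> norm (LINT y|lborel. G y)" by simp
    also have "\<dots> \<le> C * k powr q + c0 * N * k"
      using nG unfolding C_def by (simp add: algebra_simps)
    finally show "norm (checkFT f k) \<le> C * k powr qexp \<epsilon> + c0 * N * k"
      unfolding q_def .
  qed
qed



theorem lemma2:
  fixes f f' :: "real \<Rightarrow> complex"
    and Cm Cp L \<alpha> \<epsilon> :: real
  assumes f_int: "integrable lborel f"
    and FT0: "FT f 0 = 0"
    and f_deriv: "\<And>y. (f has_vector_derivative f' y) (at y)"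
    and f'_int: "integrable lborel f'"
    and Cm_pos: "Cm > 0" and Cp_pos: "Cp > 0"
    and L_gt: "L > 1" and \<alpha>_pos: "\<alpha> > 0" and \<epsilon>_pos: "\<epsilon> > 0"
    and decay_minus: "\<And>y. y \<le> - L \<Longrightarrow> norm (f y) \<le> Cm / (- y) powr (1 + \<epsilon>)"
    and decay_plus: "\<And>y. y \<ge> L \<Longrightarrow> norm (f y) \<le> Cp / y powr (1 + \<alpha>)"
  shows
    "(\<exists>C>0. \<exists>M. \<forall>\<^sub>F k in at_right 0.
        norm (checkFT f k) \<le> C * k powr (qexp \<epsilon>) + M * k)
   \<and> (\<exists>M. \<forall>\<^sub>F k in at_top.
        norm (checkFT f k) \<le> 2 powr (1 + \<alpha>) * Cp / (\<alpha> * (ln k) powr \<alpha>) + M / sqrt k)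
   \<and> (\<exists>M. \<forall>\<^sub>F k in at_right 0.
        norm (checkFT_Th f k) \<le> 3 * Cm / (\<epsilon> * (- ln k) powr \<epsilon>) + M * k)
   \<and> (\<exists>M. \<forall>\<^sub>F k in at_top.
        norm (checkFT_Th f k) \<le> 2 powr \<alpha> * Cp / (\<alpha> * (ln k) powr \<alpha>) + M / sqrt k)"
proof (intro conjI)
  have f0: "(LINT y|lborel. f y) = 0" by (rule FT0_int[OF FT0])
  show "\<exists>C>0. \<exists>M. \<forall>\<^sub>F k in at_right 0. norm (checkFT f k) \<le> C * k powr (qexp \<epsilon>) + M * k"
    by (rule small_k_check[OF f_int f0 Cm_pos L_gt \<epsilon>_pos decay_minus])
  show "\<exists>M. \<forall>\<^sub>F k in at_right 0. norm (checkFT_Th f k) \<le> 3 * Cm / (\<epsilon> * (- ln k) powr \<epsilon>) + M * k"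
    by (rule small_k_Th[OF f_int f0 Cm_pos L_gt \<epsilon>_pos decay_minus])
  show "\<exists>M. \<forall>\<^sub>F k in at_top.
        norm (checkFT f k) \<le> 2 powr (1 + \<alpha>) * Cp / (\<alpha> * (ln k) powr \<alpha>) + M / sqrt k"
  proof -
    have pd: "(xvar has_real_derivative 1 / (1 + exp y)) (at y)" for y
    proof -
      have ne: "1 + exp (- y) > 0" by (smt (verit) exp_gt_zero)
      have "(xvar has_real_derivative - (- exp (- y) / (1 + exp (- y)))) (at y)"
        unfolding xvar_def fun_eq_iff using ne
        by (auto intro!: derivative_eq_intros)
      moreover have "- (- exp (- y) / (1 + exp (- y))) = 1 / (1 + exp y)"
        by (simp add: exp_minus field_simps)
      ultimately show ?thesis by simp
    qed
    have wd: "((\<lambda>y. 1 + exp y) has_real_derivative exp y) (at y)" for y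
      by (auto intro!: derivative_eq_intros)
    have wb: "\<bar>1 + exp y\<bar> \<le> 2 * exp Y \<and> \<bar>exp y\<bar> \<le> 2 * exp Y" if "y \<le> Y" "0 \<le> Y" for y Y :: real
    proof -
      have a: "exp y \<le> exp Y" using that by simp
      have b: "1 \<le> exp Y" using that by simp
      have c: "0 < exp y" by simp
      have d: "\<bar>1 + exp y\<bar> = 1 + exp y" "\<bar>exp y\<bar> = exp y" using c by auto
      show ?thesis unfolding d using a b c by linarith
    qed
    obtain M where ev: "\<forall>\<^sub>F k in at_top. norm (LINT y|lborel. f y * cis (k * xvar y))
            \<le> 2 powr \<alpha> * Cp / (\<alpha> * (ln k) powr \<alpha>) + M / sqrt k"
    proof -
      have c1: "continuous_on UNIV (exp::real \<Rightarrow> real)"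
        using continuous_on_exp[OF continuous_on_id, of UNIV] by simp
      have c2: "\<And>y::real. 0 < 1 + exp y" by (intro add_pos_pos) auto
      show ?thesis using large_k[OF f_int f_deriv f'_int Cm_pos Cp_pos L_gt \<alpha>_pos \<epsilon>_pos decay_minus decay_plus wd c1 pd c2 wb] that by blast
    qed
    show ?thesis
    proof (rule exI[of _ M], rule eventually_mono[OF ev])
      fix k :: real
      assume h: "norm (LINT y|lborel. f y * cis (k * xvar y)) \<le> 2 powr \<alpha> * Cp / (\<alpha> * (ln k) powr \<alpha>) + M / sqrt k"
      have "norm (checkFT f k) \<le> norm (LINT y|lborel. f y * cis (k * xvar y)) / 2"
        unfolding checkFT_def by (rule norm_c_half)
      also have "\<dots> \<le> norm (LINT y|lborel. f y * cis (k * xvar y))" by simp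
      also have "\<dots> \<le> 2 powr \<alpha> * Cp / (\<alpha> * (ln k) powr \<alpha>) + M / sqrt k" by (rule h)
      also have "2 powr \<alpha> * Cp / (\<alpha> * (ln k) powr \<alpha>) \<le> 2 powr (1 + \<alpha>) * Cp / (\<alpha> * (ln k) powr \<alpha>)"
        using Cp_pos \<alpha>_pos by (intro divide_right_mono mult_right_mono powr_mono) auto
      finally show "norm (checkFT f k) \<le> 2 powr (1 + \<alpha>) * Cp / (\<alpha> * (ln k) powr \<alpha>) + M / sqrt k"
        by simp
    qed
  qed
  show "\<exists>M. \<forall>\<^sub>F k in at_top.
        norm (checkFT_Th f k) \<le> 2 powr \<alpha> * Cp / (\<alpha> * (ln k) powr \<alpha>) + M / sqrt k"
  proof -
    have pd: "((\<lambda>y. - exp (- y)) has_real_derivative 1 / exp y) (at y)" for y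
    proof -
      have "((\<lambda>y. - exp (- y)) has_real_derivative exp (- y)) (at y)"
        by (auto intro!: derivative_eq_intros)
      then show ?thesis by (simp add: exp_minus divide_inverse)
    qed
    have wd: "(exp has_real_derivative exp y) (at y)" for y
      by (auto intro!: derivative_eq_intros)
    have wb: "\<bar>exp y\<bar> \<le> 2 * exp Y \<and> \<bar>exp y\<bar> \<le> 2 * exp Y" if "y \<le> Y" "0 \<le> Y" for y Y :: real
    proof -
      have a: "exp y \<le> exp Y" using that by simp
      have c: "0 < exp y" by simp
      have d: "\<bar>exp y\<bar> = exp y" using c by auto
      show ?thesis unfolding d using a c by linarith
    qed
    obtain M where ev: "\<forall>\<^sub>F k in at_top. norm (LINT y|lborel. f y * cis (k * - exp (- y)))
            \<le> 2 powr \<alpha> * Cp / (\<alpha> * (ln k) powr \<alpha>) + M / sqrt k"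
    proof -
      have c1: "continuous_on UNIV (exp::real \<Rightarrow> real)"
        using continuous_on_exp[OF continuous_on_id, of UNIV] by simp
      have c2: "\<And>y::real. 0 < exp y" by simp
      show ?thesis using large_k[OF f_int f_deriv f'_int Cm_pos Cp_pos L_gt \<alpha>_pos \<epsilon>_pos decay_minus decay_plus wd c1 pd c2 wb] that by blast
    qed
    show ?thesis
    proof (rule exI[of _ M], rule eventually_mono[OF ev])
      fix k :: real
      assume h: "norm (LINT y|lborel. f y * cis (k * - exp (- y))) \<le> 2 powr \<alpha> * Cp / (\<alpha> * (ln k) powr \<alpha>) + M / sqrt k"
      have e: "(\<lambda>y. f y * cis (- k * exp (- y))) = (\<lambda>y. f y * cis (k * - exp (- y)))" by simp
      have "norm (checkFT_Th f k) \<le> norm (LINT y|lborel. f y * cis (k * - exp (- y))) / 2"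
        unfolding checkFT_Th_def e by (rule norm_c_half)
      also have "\<dots> \<le> norm (LINT y|lborel. f y * cis (k * - exp (- y)))" by simp
      also have "\<dots> \<le> 2 powr \<alpha> * Cp / (\<alpha> * (ln k) powr \<alpha>) + M / sqrt k" by (rule h)
      finally show "norm (checkFT_Th f k) \<le> 2 powr \<alpha> * Cp / (\<alpha> * (ln k) powr \<alpha>) + M / sqrt k" .
    qed
  qed
qed


end
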